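(* Let $(X,\phi)$ be an acyclic convex geometry and let $A\subseteq X$ be a minimal generator of $b\in X$. Then $A$ is redundant if and only if $\phi(A)$ contains a minimal generator of $b$ different from $A$.
   Context: All sets are finite. A closure operator $\phi$ on $X$ is extensive, monotone and idempotent on $2^X$; closed sets are those with $\phi(C)=C$. $(X,\phi)$ is standard if $\phi(\emptyset)=\emptyset$ and $\phi(\{x\})\setminus\{x\}$ is closed for each $x$. A unit implicational base $\Sigma$ (set of implications $A\to b$, $A\subseteq X$, $b\in X$) is an implicational base of $(X,\phi)$ if its closed sets (sets $S$ such that for each $A\to b\in\Sigma$, $A\not\subseteq S$ or $b\in S$) are exactly the closed sets of $\phi$. $\Sigma$ is acyclic if the directed graph on $X$ with arcs $x\to y$ whenever some $A\to y\in\Sigma$ has $x\in A$ has no directed cycle; $\Sigma$ is irredundant if removing any implication changes the closed sets. An acyclic convex geometry is a standard closure space $(X,\phi)$ admitting an acyclic implicational base. A set $A$ is a minimal generator of $b$ if $b\in\phi(A)$ and $b\notin\phi(A\setminus\{x\})$ for all $x\in A$. It is known that an acyclic convex geometry admits a unique irredundant implicational base in which every implication $A\to b$ has $A$ a minimal generator of $b$; this is the critical base. A minimal generator $A$ of $b$ is critical if $A\to b$ belongs to the critical base, and redundant otherwise. *)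

theory Defs
  imports Main
begin

type_synonym 'a impl = "'a set \<times> 'a"

definition closure_operator :: "'a set \<Rightarrow> ('a set \<Rightarrow> 'a set) \<Rightarrow> bool" where
  "closure_operator X phi \<longleftrightarrow>
     (\<forall>S. S \<subseteq> X \<longrightarrow> S \<subseteq> phi S \<and> phi S \<subseteq> X) \<and>
     (\<forall>S T. S \<subseteq> T \<and> T \<subseteq> X \<longrightarrow> phi S \<subseteq> phi T) \<and>
     (\<forall>S. S \<subseteq> X \<longrightarrow> phi (phi S) = phi S)"

definition closed_sets :: "'a set \<Rightarrow> ('a set \<Rightarrow> 'a set) \<Rightarrow> 'a set set" where
  "closed_sets X phi = {C. C \<subseteq> X \<and> phi C = C}"

definition standard :: "'a set \<Rightarrow> ('a set \<Rightarrow> 'a set) \<Rightarrow> bool" where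
  "standard X phi \<longleftrightarrow> closure_operator X phi \<and> phi {} = {} \<and>
     (\<forall>x\<in>X. phi {x} - {x} \<in> closed_sets X phi)"

definition Sigma_closed_sets :: "'a set \<Rightarrow> 'a impl set \<Rightarrow> 'a set set" where
  "Sigma_closed_sets X \<Sigma> = {S. S \<subseteq> X \<and> (\<forall>(A, b)\<in>\<Sigma>. \<not> A \<subseteq> S \<or> b \<in> S)}"

definition is_impl_base :: "'a set \<Rightarrow> ('a set \<Rightarrow> 'a set) \<Rightarrow> 'a impl set \<Rightarrow> bool" where
  "is_impl_base X phi \<Sigma> \<longleftrightarrow> (\<forall>(A, b)\<in>\<Sigma>. A \<subseteq> X \<and> b \<in> X) \<and>
     Sigma_closed_sets X \<Sigma> = closed_sets X phi"

definition dep_graph :: "'a impl set \<Rightarrow> 'a rel" where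
  "dep_graph \<Sigma> = {(x, y). \<exists>A. (A, y) \<in> \<Sigma> \<and> x \<in> A}"

definition acyclic_base :: "'a impl set \<Rightarrow> bool" where
  "acyclic_base \<Sigma> \<longleftrightarrow> acyclic (dep_graph \<Sigma>)"

definition irredundant :: "'a set \<Rightarrow> 'a impl set \<Rightarrow> bool" where
  "irredundant X \<Sigma> \<longleftrightarrow> (\<forall>i\<in>\<Sigma>. Sigma_closed_sets X (\<Sigma> - {i}) \<noteq> Sigma_closed_sets X \<Sigma>)"

definition acyclic_convex_geometry :: "'a set \<Rightarrow> ('a set \<Rightarrow> 'a set) \<Rightarrow> bool" where
  "acyclic_convex_geometry X phi \<longleftrightarrow> finite X \<and> standard X phi \<and>
     (\<exists>\<Sigma>. is_impl_base X phi \<Sigma> \<and> acyclic_base \<Sigma>)"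

definition min_gen :: "'a set \<Rightarrow> ('a set \<Rightarrow> 'a set) \<Rightarrow> 'a set \<Rightarrow> 'a \<Rightarrow> bool" where
  "min_gen X phi A b \<longleftrightarrow> A \<subseteq> X \<and> b \<in> X \<and> b \<notin> A \<and> b \<in> phi A \<and>
     (\<forall>x\<in>A. b \<notin> phi (A - {x}))"

definition critical_base :: "'a set \<Rightarrow> ('a set \<Rightarrow> 'a set) \<Rightarrow> 'a impl set" where
  "critical_base X phi = (THE \<Sigma>. is_impl_base X phi \<Sigma> \<and> irredundant X \<Sigma> \<and>
     (\<forall>(A, b)\<in>\<Sigma>. min_gen X phi A b))"

definition critical :: "'a set \<Rightarrow> ('a set \<Rightarrow> 'a set) \<Rightarrow> 'a set \<Rightarrow> 'a \<Rightarrow> bool" where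
  "critical X phi A b \<longleftrightarrow> min_gen X phi A b \<and> (A, b) \<in> critical_base X phi"

definition redundant :: "'a set \<Rightarrow> ('a set \<Rightarrow> 'a set) \<Rightarrow> 'a set \<Rightarrow> 'a \<Rightarrow> bool" where
  "redundant X phi A b \<longleftrightarrow> min_gen X phi A b \<and> (A, b) \<notin> critical_base X phi"

end

theory Submission
  imports Defs
begin

lemma co1: "closure_operator X phi \<Longrightarrow> \<forall>S. S \<subseteq> X \<longrightarrow> S \<subseteq> phi S \<and> phi S \<subseteq> X"
  unfolding closure_operator_def by (rule conjunct1)
lemma co2: "closure_operator X phi \<Longrightarrow> \<forall>S T. S \<subseteq> T \<and> T \<subseteq> X \<longrightarrow> phi S \<subseteq> phi T"
  unfolding closure_operator_def by (rule conjunct1[OF conjunct2])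
lemma co3: "closure_operator X phi \<Longrightarrow> \<forall>S. S \<subseteq> X \<longrightarrow> phi (phi S) = phi S"
  unfolding closure_operator_def by (rule conjunct2[OF conjunct2])
lemma co_ext: "closure_operator X phi \<Longrightarrow> S \<subseteq> X \<Longrightarrow> S \<subseteq> phi S"
  using co1 by metis
lemma co_sub: "closure_operator X phi \<Longrightarrow> S \<subseteq> X \<Longrightarrow> phi S \<subseteq> X"
  using co1 by metis
lemma co_mono: "closure_operator X phi \<Longrightarrow> S \<subseteq> T \<Longrightarrow> T \<subseteq> X \<Longrightarrow> phi S \<subseteq> phi T"
  using co2 by metis
lemma co_idem: "closure_operator X phi \<Longrightarrow> S \<subseteq> X \<Longrightarrow> phi (phi S) = phi S"
  using co3 by metis
lemma co_least:
  assumes "closure_operator X phi" "S \<subseteq> C" "C \<subseteq> X" "phi C = C"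
  shows "phi S \<subseteq> C"
  using co_mono[OF assms(1,2,3)] assms(4) by simp

lemma base_closed:
  assumes "is_impl_base X phi \<Sigma>" "S \<subseteq> X"
  shows "(\<forall>(A, b)\<in>\<Sigma>. \<not> A \<subseteq> S \<or> b \<in> S) \<longleftrightarrow> phi S = S"
proof -
  have "S \<in> Sigma_closed_sets X \<Sigma> \<longleftrightarrow> S \<in> closed_sets X phi"
    using assms(1) unfolding is_impl_base_def by simp
  thus ?thesis using assms(2) unfolding Sigma_closed_sets_def closed_sets_def by blast
qed

lemma exists_min_gen:
  assumes co: "closure_operator X phi" and fin: "finite X" and AX: "A \<subseteq> X"
    and b: "b \<in> phi A" "b \<notin> A"
  shows "\<exists>A'\<subseteq>A. min_gen X phi A' b"
proof -
  define P where "P n \<longleftrightarrow> (\<exists>A'\<subseteq>A. b \<in> phi A' \<and> card A' = n)" for n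
  have "P (card A)" unfolding P_def using b by (intro exI[of _ A]) simp
  define n where "n = (LEAST n. P n)"
  have Pn: "P n" unfolding n_def by (rule LeastI) fact
  have least: "\<And>m. P m \<Longrightarrow> n \<le> m" unfolding n_def by (rule Least_le)
  from Pn obtain A' where A': "A' \<subseteq> A" "b \<in> phi A'" "card A' = n" unfolding P_def by blast
  have finA': "finite A'" using finite_subset[OF subset_trans[OF A'(1) AX] fin] .
  have bX: "b \<in> X" using co_sub[OF co AX] b by blast
  have "min_gen X phi A' b"
    unfolding min_gen_def
  proof (intro conjI ballI)
    show "A' \<subseteq> X" using A' AX by blast
    show "b \<in> X" by fact
    show "b \<notin> A'" using A' b by blast
    show "b \<in> phi A'" by fact
  next
    fix x assume x: "x \<in> A'"
    show "b \<notin> phi (A' - {x})"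
    proof
      assume "b \<in> phi (A' - {x})"
      hence "P (card (A' - {x}))" unfolding P_def using A' by (intro exI[of _ "A' - {x}"]) auto
      hence "n \<le> card (A' - {x})" by (rule least)
      moreover have "card (A' - {x}) < card A'" using x finA' by (rule card_Diff1_less[rotated])
      ultimately show False using A' by simp
    qed
  qed
  thus ?thesis using A' by blast
qed

lemma localize:
  assumes co: "closure_operator X phi" and base: "is_impl_base X phi \<Sigma>"
    and D: "\<And>C c. (C, c) \<in> \<Sigma> \<Longrightarrow> c \<in> D \<Longrightarrow> C \<subseteq> D"
    and AX: "A \<subseteq> X"
  shows "phi A \<inter> D \<subseteq> phi (A \<inter> D)"
proof -
  define S where "S = phi (A \<inter> D) \<union> (X - D)"
  have ADX: "A \<inter> D \<subseteq> X" using AX by blast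
  have SX: "S \<subseteq> X" unfolding S_def using co_sub[OF co ADX] by blast
  have cl: "phi (phi (A \<inter> D)) = phi (A \<inter> D)" using co_idem[OF co ADX] .
  have clP: "\<forall>(C, c)\<in>\<Sigma>. \<not> C \<subseteq> phi (A \<inter> D) \<or> c \<in> phi (A \<inter> D)"
    using base_closed[OF base co_sub[OF co ADX]] cl by blast
  have "\<forall>(C, c)\<in>\<Sigma>. \<not> C \<subseteq> S \<or> c \<in> S"
  proof (clarify)
    fix C c assume Cc: "(C, c) \<in> \<Sigma>" and CS: "C \<subseteq> S" and cS: "c \<notin> S"
    have cD: "c \<in> D" using cS base Cc unfolding S_def is_impl_base_def by blast
    have "C \<subseteq> D" using D[OF Cc cD] .
    hence "C \<subseteq> phi (A \<inter> D)" using CS unfolding S_def by blast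
    hence "c \<in> phi (A \<inter> D)" using clP Cc by blast
    thus False using cS unfolding S_def by blast
  qed
  hence phS: "phi S = S" using base_closed[OF base SX] by simp
  have "A \<inter> D \<subseteq> phi (A \<inter> D)" using co_ext[OF co ADX] .
  hence "A \<subseteq> S" unfolding S_def using AX by auto
  hence "phi A \<subseteq> S" using co_least[OF co _ SX phS] by simp
  thus ?thesis unfolding S_def by auto
qed

lemma localize_down:
  assumes co: "closure_operator X phi" and base: "is_impl_base X phi \<Sigma>"
    and AX: "A \<subseteq> X" and y: "y \<in> phi A"
  shows "y \<in> phi (A \<inter> {z. (z, y) \<in> (dep_graph \<Sigma>)\<^sup>*})"
proof -
  have "phi A \<inter> {z. (z, y) \<in> (dep_graph \<Sigma>)\<^sup>*} \<subseteq> phi (A \<inter> {z. (z, y) \<in> (dep_graph \<Sigma>)\<^sup>*})"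
  proof (rule localize[OF co base _ AX])
    fix C c assume "(C, c) \<in> \<Sigma>" "c \<in> {z. (z, y) \<in> (dep_graph \<Sigma>)\<^sup>*}"
    show "C \<subseteq> {z. (z, y) \<in> (dep_graph \<Sigma>)\<^sup>*}"
    proof
      fix x assume "x \<in> C"
      hence "(x, c) \<in> dep_graph \<Sigma>" using \<open>(C, c) \<in> \<Sigma>\<close> unfolding dep_graph_def by blast
      moreover have "(c, y) \<in> (dep_graph \<Sigma>)\<^sup>*" using \<open>c \<in> _\<close> by simp
      ultimately show "x \<in> {z. (z, y) \<in> (dep_graph \<Sigma>)\<^sup>*}" by (simp add: converse_rtrancl_into_rtrancl)
    qed
  qed
  thus ?thesis using y by blast
qed

lemma min_gen_below:
  assumes co: "closure_operator X phi" and base: "is_impl_base X phi \<Sigma>"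
    and mg: "min_gen X phi A b" and y: "y \<in> A"
  shows "(y, b) \<in> (dep_graph \<Sigma>)\<^sup>+"
proof -
  let ?D = "{z. (z, b) \<in> (dep_graph \<Sigma>)\<^sup>*}"
  have AX: "A \<subseteq> X" and bA: "b \<in> phi A" "b \<notin> A" using mg unfolding min_gen_def by auto
  have b1: "b \<in> phi (A \<inter> ?D)" using localize_down[OF co base AX bA(1)] .
  have "y \<in> ?D"
  proof (rule ccontr)
    assume "y \<notin> ?D"
    hence "A \<inter> ?D \<subseteq> A - {y}" by blast
    hence "phi (A \<inter> ?D) \<subseteq> phi (A - {y})" using co_mono[OF co] AX by blast
    thus False using b1 mg y unfolding min_gen_def by blast
  qed
  moreover have "y \<noteq> b" using y bA by blast
  ultimately show ?thesis by (auto simp: rtrancl_eq_or_trancl)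
qed

lemma lemmaE:
  assumes co: "closure_operator X phi" and base: "is_impl_base X phi \<Sigma>"
    and acy: "acyclic (dep_graph \<Sigma>)"
    and mg: "min_gen X phi A b" and BA: "B \<subseteq> phi A" and BX: "B \<subseteq> X"
    and a: "a \<in> A" "a \<notin> B" "a \<in> phi B"
  shows False
proof -
  let ?R = "dep_graph \<Sigma>"
  let ?D = "{z. (z, a) \<in> ?R\<^sup>*}"
  have AX: "A \<subseteq> X" using mg unfolding min_gen_def by auto
  have AaX: "A - {a} \<subseteq> X" using AX by blast
  have a1: "a \<in> phi (B \<inter> ?D)" using localize_down[OF co base BX a(3)] .
  have sub: "B \<inter> ?D \<subseteq> phi (A - {a})"
  proof
    fix y assume yB: "y \<in> B \<inter> ?D"
    have ya: "(y, a) \<in> ?R\<^sup>*" using yB by blast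
    have yne: "y \<noteq> a" using yB a by blast
    have "y \<in> phi (A \<inter> {z. (z, y) \<in> ?R\<^sup>*})" using localize_down[OF co base AX] yB BA by blast
    moreover have "A \<inter> {z. (z, y) \<in> ?R\<^sup>*} \<subseteq> A - {a}"
    proof
      fix z assume z: "z \<in> A \<inter> {z. (z, y) \<in> ?R\<^sup>*}"
      have "z \<noteq> a"
      proof
        assume "z = a"
        hence "(a, y) \<in> ?R\<^sup>*" using z by blast
        hence "(a, y) \<in> ?R\<^sup>+" using yne by (auto simp: rtrancl_eq_or_trancl)
        hence "(a, a) \<in> ?R\<^sup>+" using ya by (meson trancl_rtrancl_trancl)
        thus False using acy unfolding acyclic_def by blast
      qed
      thus "z \<in> A - {a}" using z by blast
    qed
    hence "phi (A \<inter> {z. (z, y) \<in> ?R\<^sup>*}) \<subseteq> phi (A - {a})" using co_mono[OF co _ AaX] by blast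
    ultimately show "y \<in> phi (A - {a})" by blast
  qed
  have "phi (B \<inter> ?D) \<subseteq> phi (phi (A - {a}))" using co_mono[OF co sub co_sub[OF co AaX]] .
  hence "a \<in> phi (A - {a})" using a1 co_idem[OF co AaX] by blast
  hence "A \<subseteq> phi (A - {a})" using co_ext[OF co AaX] by blast
  hence "phi A \<subseteq> phi (phi (A - {a}))" using co_mono[OF co _ co_sub[OF co AaX]] by blast
  hence "b \<in> phi (A - {a})" using mg co_idem[OF co AaX] unfolding min_gen_def by blast
  thus False using mg a(1) unfolding min_gen_def by blast
qed

definition crit_set :: "'a set \<Rightarrow> ('a set \<Rightarrow> 'a set) \<Rightarrow> 'a impl set" where
  "crit_set X phi = {(A, b). min_gen X phi A b \<and>
      (\<forall>B. B \<subseteq> phi A \<and> min_gen X phi B b \<longrightarrow> B = A)}"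


lemma crit_in_base:
  assumes co: "closure_operator X phi" and base: "is_impl_base X phi \<Sigma>'"
    and mgs: "\<forall>(A, b)\<in>\<Sigma>'. min_gen X phi A b"
    and K: "(A, b) \<in> crit_set X phi"
  shows "(A, b) \<in> \<Sigma>'"
proof -
  have mg: "min_gen X phi A b" and uniq: "\<And>B. B \<subseteq> phi A \<Longrightarrow> min_gen X phi B b \<Longrightarrow> B = A"
    using K unfolding crit_set_def by auto
  have AX: "A \<subseteq> X" and bA: "b \<in> phi A" "b \<notin> A" using mg unfolding min_gen_def by auto
  define S where "S = phi A - {b}"
  have phAX: "phi A \<subseteq> X" using co_sub[OF co AX] .
  have SX: "S \<subseteq> X" unfolding S_def using phAX by blast
  have AS: "A \<subseteq> S" unfolding S_def using co_ext[OF co AX] bA by blast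
  have "phi S \<noteq> S"
  proof
    assume "phi S = S"
    hence "phi A \<subseteq> S" using co_least[OF co AS SX] by simp
    thus False using bA unfolding S_def by blast
  qed
  hence "\<not> (\<forall>(B, c)\<in>\<Sigma>'. \<not> B \<subseteq> S \<or> c \<in> S)" using base_closed[OF base SX] by simp
  then obtain B c where Bc: "(B, c) \<in> \<Sigma>'" "B \<subseteq> S" "c \<notin> S" by blast
  have mgB: "min_gen X phi B c" using mgs Bc by blast
  have "phi B \<subseteq> phi S" using co_mono[OF co Bc(2) SX] .
  also have "S \<subseteq> phi A" unfolding S_def by blast
  hence "phi S \<subseteq> phi (phi A)" using co_mono[OF co _ phAX] by simp
  also have "\<dots> = phi A" using co_idem[OF co AX] .
  finally have sBA: "phi B \<subseteq> phi A" .
  have "c \<in> phi B" using mgB unfolding min_gen_def by simp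
  hence "c \<in> phi A" using sBA by (rule subsetD[rotated])
  hence cb: "c = b" using Bc unfolding S_def by blast
  have "B \<subseteq> phi A" using Bc unfolding S_def by blast
  hence "B = A" using uniq mgB cb by blast
  thus ?thesis using Bc cb by simp
qed

lemma K_closed_imp:
  assumes co: "closure_operator X phi" and fin: "finite X"
    and base: "is_impl_base X phi \<Sigma>" and acy: "acyclic (dep_graph \<Sigma>)"
    and SX: "S \<subseteq> X" and Kc: "\<forall>(A, b)\<in>crit_set X phi. \<not> A \<subseteq> S \<or> b \<in> S"
  shows "\<forall>A. min_gen X phi A b \<longrightarrow> A \<subseteq> S \<longrightarrow> b \<in> S"
proof -
  let ?R = "dep_graph \<Sigma>"
  have "?R \<subseteq> X \<times> X" using base unfolding dep_graph_def is_impl_base_def by blast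
  hence "finite ?R" using fin finite_subset by blast
  hence wfR: "wf (?R\<^sup>+)" using acy by (simp add: finite_acyclic_wf wf_trancl)
  show ?thesis
  proof (induction b rule: wf_induct[OF wfR])
    case (1 b)
    have main: "\<forall>A. card (phi A) = n \<longrightarrow> min_gen X phi A b \<longrightarrow> A \<subseteq> S \<longrightarrow> b \<in> S" for n
    proof (induction n rule: less_induct)
      case (less n)
      show ?case
      proof (intro allI impI)
        fix A assume cn: "card (phi A) = n" and mg: "min_gen X phi A b" and AS: "A \<subseteq> S"
        have AX: "A \<subseteq> X" using mg unfolding min_gen_def by auto
        show "b \<in> S"
        proof (cases "(A, b) \<in> crit_set X phi")
          case True
          thus ?thesis using Kc AS by blast
        next
          case False
          then obtain B where B: "B \<subseteq> phi A" "min_gen X phi B b" "B \<noteq> A"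
            using mg unfolding crit_set_def by auto
          have BX: "B \<subseteq> X" using B unfolding min_gen_def by auto
          have BS: "B \<subseteq> S"
          proof
            fix y assume yB: "y \<in> B"
            have yb: "(y, b) \<in> ?R\<^sup>+" using min_gen_below[OF co base B(2) yB] .
            show "y \<in> S"
            proof (rule ccontr)
              assume yS: "y \<notin> S"
              hence "y \<notin> A" using AS by blast
              then obtain A' where A': "A' \<subseteq> A" "min_gen X phi A' y"
                using exists_min_gen[OF co fin AX] B(1) yB by blast
              have "y \<in> S" using 1 yb A' AS by blast
              thus False using yS by blast
            qed
          qed
          have phA: "phi A \<subseteq> X" using co_sub[OF co AX] .
          have sub: "phi B \<subseteq> phi A" using co_mono[OF co B(1) phA] co_idem[OF co AX] by simp
          have "phi B \<noteq> phi A"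
          proof
            assume eq: "phi B = phi A"
            have "A \<subseteq> B"
            proof
              fix a assume aA: "a \<in> A"
              show "a \<in> B"
              proof (rule ccontr)
                assume "a \<notin> B"
                moreover have "a \<in> phi B" using eq co_ext[OF co AX] aA by blast
                ultimately show False using lemmaE[OF co base acy mg B(1) BX aA] by blast
              qed
            qed
            moreover have "B \<subseteq> A"
            proof
              fix a assume aB: "a \<in> B"
              show "a \<in> A"
              proof (rule ccontr)
                assume "a \<notin> A"
                moreover have "a \<in> phi A" using B(1) aB by blast
                moreover have "A \<subseteq> phi B" using eq co_ext[OF co AX] by blast
                ultimately show False using lemmaE[OF co base acy B(2) _ AX aB] by blast
              qed
            qed
            ultimately show False using B(3) by blast
          qed
          hence "phi B \<subset> phi A" using sub by blast
          moreover have "finite (phi A)" using phA fin finite_subset by blast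
          ultimately have "card (phi B) < n" using cn psubset_card_mono by blast
          thus ?thesis using less B(2) BS by blast
        qed
      qed
    qed
    thus ?case by blast
  qed
qed

lemma crit_is_base:
  assumes co: "closure_operator X phi" and fin: "finite X"
    and base: "is_impl_base X phi \<Sigma>" and acy: "acyclic (dep_graph \<Sigma>)"
  shows "is_impl_base X phi (crit_set X phi)"
  unfolding is_impl_base_def
proof (intro conjI)
  show "\<forall>(A, b)\<in>crit_set X phi. A \<subseteq> X \<and> b \<in> X"
    unfolding crit_set_def min_gen_def by auto
  show "Sigma_closed_sets X (crit_set X phi) = closed_sets X phi"
  proof (intro set_eqI iffI)
    fix S assume "S \<in> Sigma_closed_sets X (crit_set X phi)"
    hence SX: "S \<subseteq> X" and Kc: "\<forall>(A, b)\<in>crit_set X phi. \<not> A \<subseteq> S \<or> b \<in> S"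
      unfolding Sigma_closed_sets_def by auto
    have "phi S \<subseteq> S"
    proof
      fix c assume c: "c \<in> phi S"
      show "c \<in> S"
      proof (rule ccontr)
        assume cS: "c \<notin> S"
        then obtain A where "A \<subseteq> S" "min_gen X phi A c"
          using exists_min_gen[OF co fin SX c] by blast
        thus False using K_closed_imp[OF co fin base acy SX Kc, of c] cS by blast
      qed
    qed
    thus "S \<in> closed_sets X phi" using co_ext[OF co SX] SX unfolding closed_sets_def by blast
  next
    fix S assume "S \<in> closed_sets X phi"
    hence SX: "S \<subseteq> X" and cl: "phi S = S" unfolding closed_sets_def by auto
    have "\<forall>(A, b)\<in>crit_set X phi. \<not> A \<subseteq> S \<or> b \<in> S"
    proof (clarify)
      fix A b assume "(A, b) \<in> crit_set X phi" "A \<subseteq> S" "b \<notin> S"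
      hence "b \<in> phi A" "phi A \<subseteq> phi S" using co_mono[OF co _ SX] unfolding crit_set_def min_gen_def by auto
      thus False using cl \<open>b \<notin> S\<close> by blast
    qed
    thus "S \<in> Sigma_closed_sets X (crit_set X phi)" using SX unfolding Sigma_closed_sets_def by blast
  qed
qed

lemma Sigma_closed_anti:
  "\<Sigma>1 \<subseteq> \<Sigma>2 \<Longrightarrow> Sigma_closed_sets X \<Sigma>2 \<subseteq> Sigma_closed_sets X \<Sigma>1"
  unfolding Sigma_closed_sets_def by blast

lemma critical_base_eq:
  assumes co: "closure_operator X phi" and fin: "finite X"
    and base: "is_impl_base X phi \<Sigma>" and acy: "acyclic (dep_graph \<Sigma>)"
  shows "critical_base X phi = crit_set X phi"
  unfolding critical_base_def
proof (rule the_equality)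
  let ?K = "crit_set X phi"
  have Kb: "is_impl_base X phi ?K" using crit_is_base[OF co fin base acy] .
  have Kmg: "\<forall>(A, b)\<in>?K. min_gen X phi A b" unfolding crit_set_def by auto
  have "irredundant X ?K"
    unfolding irredundant_def
  proof (intro ballI notI)
    fix i assume iK: "i \<in> ?K" and eq: "Sigma_closed_sets X (?K - {i}) = Sigma_closed_sets X ?K"
    have "is_impl_base X phi (?K - {i})" using Kb eq unfolding is_impl_base_def by auto
    moreover have "\<forall>(A, b)\<in>?K - {i}. min_gen X phi A b" using Kmg by blast
    ultimately have "i \<in> ?K - {i}" using crit_in_base[OF co] iK by (metis prod.collapse)
    thus False by blast
  qed
  thus "is_impl_base X phi ?K \<and> irredundant X ?K \<and> (\<forall>(A, b)\<in>?K. min_gen X phi A b)"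
    using Kb Kmg by blast
next
  let ?K = "crit_set X phi"
  fix \<Sigma>' assume H: "is_impl_base X phi \<Sigma>' \<and> irredundant X \<Sigma>' \<and> (\<forall>(A, b)\<in>\<Sigma>'. min_gen X phi A b)"
  have Kb: "is_impl_base X phi ?K" using crit_is_base[OF co fin base acy] .
  have KS: "?K \<subseteq> \<Sigma>'"
  proof
    fix i assume "i \<in> ?K"
    thus "i \<in> \<Sigma>'" using crit_in_base[OF co] H by (metis prod.collapse)
  qed
  have "\<Sigma>' \<subseteq> ?K"
  proof
    fix i assume iS: "i \<in> \<Sigma>'"
    show "i \<in> ?K"
    proof (rule ccontr)
      assume iK: "i \<notin> ?K"
      have "Sigma_closed_sets X (\<Sigma>' - {i}) \<subseteq> Sigma_closed_sets X ?K"
        using Sigma_closed_anti[of ?K "\<Sigma>' - {i}"] KS iK by blast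
      also have "\<dots> = Sigma_closed_sets X \<Sigma>'" using Kb H unfolding is_impl_base_def by simp
      finally have "Sigma_closed_sets X (\<Sigma>' - {i}) = Sigma_closed_sets X \<Sigma>'"
        using Sigma_closed_anti[of "\<Sigma>' - {i}" \<Sigma>'] by blast
      thus False using H iS unfolding irredundant_def by blast
    qed
  qed
  thus "\<Sigma>' = ?K" using KS by blast
qed

theorem proposition3:
  fixes X :: "'a set" and phi :: "'a set \<Rightarrow> 'a set" and A :: "'a set" and b :: 'a
  assumes "acyclic_convex_geometry X phi"
    and "min_gen X phi A b"
  shows "redundant X phi A b \<longleftrightarrow> (\<exists>B. B \<subseteq> phi A \<and> min_gen X phi B b \<and> B \<noteq> A)"
proof -
  obtain \<Sigma> where fin: "finite X" and co: "closure_operator X phi"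
    and base: "is_impl_base X phi \<Sigma>" and acy: "acyclic (dep_graph \<Sigma>)"
    using assms(1) unfolding acyclic_convex_geometry_def standard_def acyclic_base_def by blast
  have "critical_base X phi = crit_set X phi" using critical_base_eq[OF co fin base acy] .
  thus ?thesis using assms(2) unfolding redundant_def crit_set_def by auto
qed

end
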